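(* Let $X$ be a ball Banach function space on $\mathbb{R}^n$, $\gamma\in\mathbb{R}\setminus\{0\}$, $r\in(n,\infty)$, and $q\in(0,\infty)$. Assume that the Hardy--Littlewood maximal operator $\mathcal{M}$ is bounded on $X^{1/r}$ with operator norm $\|\mathcal{M}\|_{X^{1/r}\to X^{1/r}}$. Then there exists a positive constant $C$, depending only on $r,q,\gamma,n$ and $\|\mathcal{M}\|_{X^{1/r}\to X^{1/r}}$, such that for every $f\in C^1(\mathbb{R}^n)$ with $|\nabla f|\in C_{\mathrm c}(\mathbb{R}^n)$, $$\sup_{\lambda>0}\lambda\left\|\left[\int_{\mathbb{R}^n}\mathbf{1}_{E_{\lambda,\gamma/q}[f]}(\cdot,y)|\cdot-y|^{\gamma-n}dy\right]^{1/q}\right\|_X\le C\|\,|\nabla f|\,\|_X.$$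
   Context: A quasi-Banach space $X$ of measurable functions on $\mathbb{R}^n$ with quasi-norm defined on all measurable functions is a ball quasi-Banach function space if: $\|f\|_X=0$ implies $f=0$ a.e.; $|g|\le|f|$ a.e. implies $\|g\|_X\le\|f\|_X$; $0\le f_m\uparrow f$ a.e. implies $\|f_m\|_X\uparrow\|f\|_X$; $\mathbf{1}_B\in X$ for every ball $B$. It is a ball Banach function space if moreover the triangle inequality holds and for every ball $B$ there is $C_B$ with $\int_B|f|\le C_B\|f\|_X$. For $t>0$, $X^t:=\{f:|f|^t\in X\}$ with $\|f\|_{X^t}:=\|\,|f|^t\|_X^{1/t}$. $\mathcal{M}f(x):=\sup_{B\ni x}|B|^{-1}\int_B|f|$; bounded on $Y$ means $\|\mathcal{M}f\|_Y\le C\|f\|_Y$ for all $f\in Y$, least such $C$ being $\|\mathcal{M}\|_{Y\to Y}$. $E_{\lambda,\beta}[f]:=\{(x,y):x\ne y,\ |f(x)-f(y)|/|x-y|^{1+\beta}>\lambda\}$. *)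

theory Defs
  imports "HOL-Analysis.Analysis"
begin

text \<open>A (quasi-)norm on measurable real functions on a Euclidean space, possibly infinite.
  The space X is the set of measurable f with N f finite.\<close>

definition ball_Banach_function_space :: "(('a::euclidean_space \<Rightarrow> real) \<Rightarrow> ennreal) \<Rightarrow> bool" where
"ball_Banach_function_space N \<longleftrightarrow>
  N (\<lambda>x. 0) = 0 \<and>
  (\<forall>f \<in> borel_measurable lebesgue. \<forall>c::real. N (\<lambda>x. c * f x) = ennreal \<bar>c\<bar> * N f) \<and>
  (\<forall>f \<in> borel_measurable lebesgue. \<forall>g \<in> borel_measurable lebesgue.
      N (\<lambda>x. f x + g x) \<le> N f + N g) \<and>
  (\<forall>F. (\<forall>m. F m \<in> borel_measurable lebesgue \<and> N (F m) < \<infinity>) \<and>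
       (\<forall>e>0. \<exists>M. \<forall>m\<ge>M. \<forall>k\<ge>M. N (\<lambda>x. F m x - F k x) < ennreal e) \<longrightarrow>
       (\<exists>f \<in> borel_measurable lebesgue. N f < \<infinity> \<and> (\<lambda>m. N (\<lambda>x. F m x - f x)) \<longlonglongrightarrow> 0)) \<and>
  (\<forall>f \<in> borel_measurable lebesgue. N f = 0 \<longrightarrow> (AE x in lebesgue. f x = 0)) \<and>
  (\<forall>f \<in> borel_measurable lebesgue. \<forall>g \<in> borel_measurable lebesgue.
      (AE x in lebesgue. \<bar>g x\<bar> \<le> \<bar>f x\<bar>) \<longrightarrow> N g \<le> N f) \<and>
  (\<forall>F f. (\<forall>m. F m \<in> borel_measurable lebesgue) \<and> f \<in> borel_measurable lebesgue \<and>
      (AE x in lebesgue. (\<forall>m. 0 \<le> F m x \<and> F m x \<le> F (Suc m) x) \<and> (\<lambda>m. F m x) \<longlonglongrightarrow> f x)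
      \<longrightarrow> (\<lambda>m. N (F m)) \<longlonglongrightarrow> N f) \<and>
  (\<forall>c \<rho>. 0 < \<rho> \<longrightarrow> N (indicator (ball c \<rho>)) < \<infinity>) \<and>
  (\<forall>c \<rho>. 0 < \<rho> \<longrightarrow> (\<exists>C::real. \<forall>f \<in> borel_measurable lebesgue.
      (\<integral>\<^sup>+x\<in>ball c \<rho>. ennreal \<bar>f x\<bar> \<partial>lebesgue) \<le> ennreal C * N f))"

definition enn_powr :: "ennreal \<Rightarrow> real \<Rightarrow> ennreal" where
"enn_powr a t = (if a = \<infinity> then \<infinity> else ennreal (enn2real a powr t))"

text \<open>Canonical (Fatou) extension of N to [0,\<infinity>]-valued functions.\<close>
definition ext_norm :: "(('a \<Rightarrow> real) \<Rightarrow> ennreal) \<Rightarrow> ('a \<Rightarrow> ennreal) \<Rightarrow> ennreal" where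
"ext_norm N g = (SUP m::nat. N (\<lambda>x. enn2real (min (g x) (of_nat m))))"

text \<open>Quasi-norm of the convexification X^t: ||g||_{X^t} = || |g|^t ||_X^{1/t}.\<close>
definition pow_norm :: "(('a \<Rightarrow> real) \<Rightarrow> ennreal) \<Rightarrow> real \<Rightarrow> ('a \<Rightarrow> ennreal) \<Rightarrow> ennreal" where
"pow_norm N t g = enn_powr (ext_norm N (\<lambda>x. enn_powr (g x) t)) (1 / t)"

definition hl_max :: "('a::euclidean_space \<Rightarrow> real) \<Rightarrow> 'a \<Rightarrow> ennreal" where
"hl_max f x = (SUP B \<in> {ball c \<rho> | c \<rho>. 0 < \<rho> \<and> x \<in> ball c \<rho>}.
     (\<integral>\<^sup>+y\<in>B. ennreal \<bar>f y\<bar> \<partial>lebesgue) / emeasure lebesgue B)"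

definition maximal_bound :: "(('a::euclidean_space \<Rightarrow> real) \<Rightarrow> ennreal) \<Rightarrow> real \<Rightarrow> real \<Rightarrow> bool" where
"maximal_bound N t K \<longleftrightarrow> 0 \<le> K \<and>
  (\<forall>f \<in> borel_measurable lebesgue. pow_norm N t (\<lambda>x. ennreal \<bar>f x\<bar>) < \<infinity> \<longrightarrow>
      pow_norm N t (hl_max f) \<le> ennreal K * pow_norm N t (\<lambda>x. ennreal \<bar>f x\<bar>))"

text \<open>Operator norm of M on X^t (least bound; meaningful when some bound exists).\<close>
definition hl_opnorm :: "(('a::euclidean_space \<Rightarrow> real) \<Rightarrow> ennreal) \<Rightarrow> real \<Rightarrow> real" where
"hl_opnorm N t = Inf {K. maximal_bound N t K}"

definition E_set :: "real \<Rightarrow> real \<Rightarrow> ('a::euclidean_space \<Rightarrow> real) \<Rightarrow> ('a \<times> 'a) set" where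
"E_set lam \<beta> f = {(x, y). x \<noteq> y \<and> \<bar>f x - f y\<bar> / norm (x - y) powr (1 + \<beta>) > lam}"

end

theory Submission
  imports Defs
begin


lemma BBF_mono:
  assumes "ball_Banach_function_space N" "f \<in> borel_measurable lebesgue" "g \<in> borel_measurable lebesgue"
    "\<And>x. \<bar>g x\<bar> \<le> \<bar>f x\<bar>"
  shows "N g \<le> N f"
  using assms unfolding ball_Banach_function_space_def by auto

lemma BBF_hom:
  assumes "ball_Banach_function_space N" "f \<in> borel_measurable lebesgue"
  shows "N (\<lambda>x. c * f x) = ennreal \<bar>c\<bar> * N f"
  using assms unfolding ball_Banach_function_space_def by auto

lemma ext_norm_mono:
  assumes N: "ball_Banach_function_space N"
    and m: "g1 \<in> borel_measurable lebesgue" "g2 \<in> borel_measurable lebesgue"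
    and le: "\<And>x. g1 x \<le> g2 x"
  shows "ext_norm N g1 \<le> ext_norm N g2"
  unfolding ext_norm_def
proof (rule SUP_mono)
  fix m :: nat
  have "N (\<lambda>x. enn2real (min (g1 x) (of_nat m))) \<le> N (\<lambda>x. enn2real (min (g2 x) (of_nat m)))"
  proof (rule BBF_mono[OF N])
    show "(\<lambda>x. enn2real (min (g1 x) (of_nat m))) \<in> borel_measurable lebesgue"
      using m by measurable
    show "(\<lambda>x. enn2real (min (g2 x) (of_nat m))) \<in> borel_measurable lebesgue"
      using m by measurable
    fix x
    have A: "min (g1 x) (of_nat m) \<le> min (g2 x) (of_nat m)" using le[of x] by (simp add: min.coboundedI1)
    have B: "min (g2 x) (of_nat m) < top" by (simp add: min_less_iff_disj of_nat_less_top)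
    have "enn2real (min (g1 x) (of_nat m)) \<le> enn2real (min (g2 x) (of_nat m))"
      using enn2real_mono[OF A B] .
    then show "\<bar>enn2real (min (g1 x) (of_nat m))\<bar> \<le> \<bar>enn2real (min (g2 x) (of_nat m))\<bar>" by simp
  qed
  then show "\<exists>n\<in>UNIV. N (\<lambda>x. enn2real (min (g1 x) (of_nat m))) \<le> N (\<lambda>x. enn2real (min (g2 x) (of_nat n)))"
    by blast
qed

lemma trunc_scale:
  fixes c :: real and a :: ennreal and m k :: nat
  assumes c: "c > 0" and k: "real m \<le> c * real k"
  shows "enn2real (min (ennreal c * a) (of_nat m)) \<le> c * enn2real (min a (of_nat k))"
proof (cases a)
  case (real v)
  then have v: "v \<ge> 0" by simp
  have "min (ennreal c * a) (of_nat m) = ennreal (min (c * v) (real m))"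
    using real c v by (simp add: ennreal_mult'[symmetric] ennreal_of_nat_eq_real_of_nat min_def ennreal_le_iff2)
  moreover have "min a (of_nat k) = ennreal (min v (real k))"
    using real v by (simp add: ennreal_of_nat_eq_real_of_nat min_def)
  moreover have "min (c * v) (real m) \<le> c * min v (real k)"
  proof (cases "v \<le> real k")
    case True then show ?thesis by (simp add: min_def)
  next
    case False
    then have "c * real k < c * v" using c by simp
    then have "real m < c * v" using k by linarith
    then show ?thesis using False k by (simp add: min_def)
  qed
  ultimately show ?thesis using c v by simp
next
  case top
  have "min (ennreal c * a) (of_nat m) = of_nat m" using top c by (simp add: ennreal_mult_top min_def top_unique)
  moreover have "min a (of_nat k) = of_nat k" using top by (simp add: min_def top_unique)
  ultimately show ?thesis using c k by simp
qed

lemma ext_norm_scale: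
  assumes N: "ball_Banach_function_space N"
    and m: "g \<in> borel_measurable lebesgue" and c: "c > 0"
  shows "ext_norm N (\<lambda>x. ennreal c * g x) \<le> ennreal c * ext_norm N g"
  unfolding ext_norm_def
proof (rule SUP_least)
  fix m :: nat
  define k where "k = nat \<lceil>real m / c\<rceil>"
  have k: "real m \<le> c * real k"
    using c unfolding k_def
    by (metis divide_le_eq le_nat_iff mult.commute of_nat_0_le_iff real_nat_ceiling_ge)
  have "N (\<lambda>x. enn2real (min (ennreal c * g x) (of_nat m))) \<le> N (\<lambda>x. c * enn2real (min (g x) (of_nat k)))"
  proof (rule BBF_mono[OF N])
    show "(\<lambda>x. enn2real (min (ennreal c * g x) (of_nat m))) \<in> borel_measurable lebesgue"
      using m by measurable
    show "(\<lambda>x. c * enn2real (min (g x) (of_nat k))) \<in> borel_measurable lebesgue"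
      using m by measurable
    fix x
    show "\<bar>enn2real (min (ennreal c * g x) (of_nat m))\<bar> \<le> \<bar>c * enn2real (min (g x) (of_nat k))\<bar>"
      using trunc_scale[OF c k, of "g x"] c by simp
  qed
  also have "\<dots> = ennreal c * N (\<lambda>x. enn2real (min (g x) (of_nat k)))"
    using BBF_hom[OF N, of "\<lambda>x. enn2real (min (g x) (of_nat k))" c] m c by (simp add: measurable_compose)
  also have "\<dots> \<le> ennreal c * (SUP m. N (\<lambda>x. enn2real (min (g x) (of_nat m))))"
    by (intro mult_left_mono SUP_upper) auto
  finally show "N (\<lambda>x. enn2real (min (ennreal c * g x) (of_nat m))) \<le> ennreal c * (SUP m. N (\<lambda>x. enn2real (min (g x) (of_nat m))))" .
qed

lemma ext_norm_real:
  assumes N: "ball_Banach_function_space N"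
    and m: "u \<in> borel_measurable lebesgue" and nn: "\<And>x. u x \<ge> 0"
  shows "ext_norm N (\<lambda>x. ennreal (u x)) \<le> N u"
  unfolding ext_norm_def
proof (rule SUP_least)
  fix m :: nat
  show "N (\<lambda>x. enn2real (min (ennreal (u x)) (of_nat m))) \<le> N u"
  proof (rule BBF_mono[OF N m])
    show "(\<lambda>x. enn2real (min (ennreal (u x)) (of_nat m))) \<in> borel_measurable lebesgue"
      using m by measurable
    fix x
    have "enn2real (min (ennreal (u x)) (of_nat m)) \<le> enn2real (ennreal (u x))"
      by (rule enn2real_mono) auto
    then show "\<bar>enn2real (min (ennreal (u x)) (of_nat m))\<bar> \<le> \<bar>u x\<bar>" using nn[of x] by simp
  qed
qed



lemma maximal_bound_mono:
  assumes "maximal_bound N t K1" "K1 \<le> K2"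
  shows "maximal_bound N t K2"
  unfolding maximal_bound_def
proof (intro conjI ballI impI)
  show "0 \<le> K2" using assms unfolding maximal_bound_def by auto
  fix f :: "'a \<Rightarrow> real" assume f: "f \<in> borel_measurable lebesgue" "pow_norm N t (\<lambda>x. ennreal \<bar>f x\<bar>) < \<infinity>"
  have "pow_norm N t (hl_max f) \<le> ennreal K1 * pow_norm N t (\<lambda>x. ennreal \<bar>f x\<bar>)"
    using assms(1) f unfolding maximal_bound_def by auto
  also have "\<dots> \<le> ennreal K2 * pow_norm N t (\<lambda>x. ennreal \<bar>f x\<bar>)"
    using assms(2) by (intro mult_right_mono ennreal_leI) auto
  finally show "pow_norm N t (hl_max f) \<le> ennreal K2 * pow_norm N t (\<lambda>x. ennreal \<bar>f x\<bar>)" .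
qed

lemma opnorm_bound:
  assumes "\<exists>K'. maximal_bound N t K'" "hl_opnorm N t = K"
  shows "maximal_bound N t (K + 1)" "K \<ge> 0"
proof -
  let ?S = "{K. maximal_bound N t K}"
  have ne: "?S \<noteq> {}" using assms(1) by auto
  have bdd: "bdd_below ?S" unfolding bdd_below_def maximal_bound_def by auto
  have "Inf ?S < K + 1" using assms(2) unfolding hl_opnorm_def by simp
  then obtain K' where "K' \<in> ?S" "K' < K + 1" using cInf_lessD[OF ne] by blast
  then show "maximal_bound N t (K + 1)" using maximal_bound_mono by fastforce
  have "K = Inf ?S" using assms(2) unfolding hl_opnorm_def by simp
  also have "0 \<le> Inf ?S" using ne by (intro cInf_greatest) (auto simp: maximal_bound_def)
  finally show "K \<ge> 0" by simp
qed

lemma enn_powr_ennreal: "x \<ge> 0 \<Longrightarrow> enn_powr (ennreal x) p = ennreal (x powr p)"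
  by (simp add: enn_powr_def)

lemma enn_powr_top: "enn_powr top p = top"
  by (simp add: enn_powr_def)

lemma measurable_enn_powr[measurable]:
  assumes [measurable]: "g \<in> borel_measurable M"
  shows "(\<lambda>x. enn_powr (g x) p) \<in> borel_measurable M"
  unfolding enn_powr_def by measurable

lemma maxbound_G:
  fixes grad :: "'a::euclidean_space \<Rightarrow> 'a"
  assumes N: "ball_Banach_function_space N" and mb: "maximal_bound N (1 / r) K1"
    and r: "r > 0" and K1: "K1 > 0" and cg: "continuous_on UNIV grad"
  shows "ext_norm N (\<lambda>x. enn_powr (hl_max (\<lambda>y. norm (grad y) powr r) x) (1 / r))
          \<le> ennreal (K1 powr (1 / r)) * N (\<lambda>x. norm (grad x))"
proof -
  define A where "A = N (\<lambda>x. norm (grad x))"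
  define h where "h = (\<lambda>y. norm (grad y) powr r)"
  define G where "G = (\<lambda>x. enn_powr (hl_max h x) (1 / r))"
  define B where "B = ext_norm N G"
  have gm: "(\<lambda>x. norm (grad x)) \<in> borel_measurable lebesgue"
  proof -
    have [measurable]: "grad \<in> borel_measurable borel" using cg by (rule borel_measurable_continuous_onI)
    show ?thesis by (intro measurable_completion) measurable
  qed
  have hm: "h \<in> borel_measurable lebesgue"
    unfolding h_def using gm by measurable
  show ?thesis
  proof (cases "A = top")
    case True
    then show ?thesis using K1 r by (simp add: A_def ennreal_mult_top)
  next
    case False
    then obtain a where a: "A = ennreal a" "a \<ge> 0" by (cases A) auto
    define E1 where "E1 = ext_norm N (\<lambda>x. ennreal (norm (grad x)))"
    have E1A: "E1 \<le> A" unfolding E1_def A_def by (rule ext_norm_real[OF N gm]) auto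
    then obtain e where e: "E1 = ennreal e" "e \<ge> 0" "e \<le> a"
      using a by (cases E1) (auto simp: top_unique)
    have eq1: "(\<lambda>x. enn_powr (ennreal \<bar>h x\<bar>) (1 / r)) = (\<lambda>x. ennreal (norm (grad x)))"
      using r by (auto simp: h_def enn_powr_ennreal powr_powr)
    have P: "pow_norm N (1 / r) (\<lambda>x. ennreal \<bar>h x\<bar>) = ennreal (e powr r)"
      unfolding pow_norm_def eq1 E1_def[symmetric] using e r by (simp add: enn_powr_ennreal)
    have Pfin: "pow_norm N (1 / r) (\<lambda>x. ennreal \<bar>h x\<bar>) < \<infinity>" unfolding P by simp
    have "pow_norm N (1 / r) (hl_max h) \<le> ennreal K1 * pow_norm N (1 / r) (\<lambda>x. ennreal \<bar>h x\<bar>)"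
      using mb hm Pfin unfolding maximal_bound_def by auto
    also have "pow_norm N (1 / r) (hl_max h) = enn_powr B r"
      unfolding pow_norm_def B_def G_def using r by simp
    finally have BP: "enn_powr B r \<le> ennreal (K1 * e powr r)" unfolding P using K1 by (simp add: ennreal_mult)
    have "B \<noteq> top"
    proof
      assume "B = top"
      then show False using BP by (simp add: enn_powr_top top_unique)
    qed
    then obtain b where b: "B = ennreal b" "b \<ge> 0" by (cases B) auto
    have "ennreal (b powr r) \<le> ennreal (K1 * e powr r)" using BP b by (simp add: enn_powr_ennreal)
    moreover have "0 \<le> K1 * e powr r" using K1 by simp
    ultimately have "b powr r \<le> K1 * e powr r" by (simp only: ennreal_le_iff)
    also have "\<dots> \<le> K1 * a powr r" using e K1 r by (intro mult_left_mono powr_mono2) auto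
    finally have "(b powr r) powr (1 / r) \<le> (K1 * a powr r) powr (1 / r)"
      using r by (intro powr_mono2) auto
    then have "b \<le> K1 powr (1 / r) * a"
      using r b a K1 by (simp add: powr_powr powr_mult)
    then show ?thesis
      unfolding B_def[symmetric] G_def[symmetric] A_def[symmetric]
      using b a K1 by (simp add: G_def h_def B_def ennreal_mult[symmetric])
  qed
qed



lemma hl_max_borel: "hl_max h \<in> borel_measurable borel"
proof (rule borel_measurableI_greater)
  fix t :: ennreal
  have "open {x. t < hl_max h x}"
  proof (rule Topological_Spaces.openI)
    fix x assume "x \<in> {x. t < hl_max h x}"
    then obtain B where B: "B \<in> {ball c \<rho> | c \<rho>. 0 < \<rho> \<and> x \<in> ball c \<rho>}"
        "t < (\<integral>\<^sup>+y\<in>B. ennreal \<bar>h y\<bar> \<partial>lebesgue) / emeasure lebesgue B"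
      unfolding hl_max_def by (auto simp: less_SUP_iff)
    then obtain c \<rho> where cr: "B = ball c \<rho>" "0 < \<rho>" "x \<in> ball c \<rho>" by auto
    have "B \<subseteq> {x. t < hl_max h x}"
    proof
      fix x' assume "x' \<in> B"
      then have "B \<in> {ball c \<rho> | c \<rho>. 0 < \<rho> \<and> x' \<in> ball c \<rho>}" using cr by auto
      then have "(\<integral>\<^sup>+y\<in>B. ennreal \<bar>h y\<bar> \<partial>lebesgue) / emeasure lebesgue B \<le> hl_max h x'"
        unfolding hl_max_def by (rule SUP_upper)
      then show "x' \<in> {x. t < hl_max h x}" using B(2) by auto
    qed
    then show "\<exists>T. open T \<and> x \<in> T \<and> T \<subseteq> {x. t < hl_max h x}"
      using cr by (intro exI[of _ B]) auto
  qed
  then show "{x \<in> space borel. t < hl_max h x} \<in> sets borel" by simp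
qed

lemma E_set_borel:
  assumes [measurable]: "f \<in> borel_measurable borel"
  shows "E_set lam b f \<in> sets (borel \<Otimes>\<^sub>M borel)"
proof -
  have "E_set lam b f = {p \<in> space (borel \<Otimes>\<^sub>M borel). fst p \<noteq> snd p \<and> \<bar>f (fst p) - f (snd p)\<bar> / norm (fst p - snd p) powr (1 + b) > lam}"
    unfolding E_set_def by (auto simp: space_pair_measure)
  also have "\<dots> \<in> sets (borel \<Otimes>\<^sub>M borel)" by measurable
  finally show ?thesis .
qed

lemma F_measurable:
  assumes [measurable]: "f \<in> borel_measurable borel"
  shows "(\<lambda>x. \<integral>\<^sup>+y. indicator (E_set lam b f) (x, y) * ennreal (norm (x - y) powr p) \<partial>lebesgue)
          \<in> borel_measurable lebesgue"
proof -
  have "(\<lambda>(x, y). indicator (E_set lam b f) (x, y) * ennreal (norm (x - y) powr p))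
          \<in> borel_measurable (lborel \<Otimes>\<^sub>M lborel)"
  proof -
    have E: "E_set lam b f \<in> sets (lborel \<Otimes>\<^sub>M lborel)"
      using E_set_borel[of f lam b] by (simp add: sets_pair_measure_cong[OF sets_lborel sets_lborel])
    show ?thesis using E by measurable
  qed
  then have "(\<lambda>x. \<integral>\<^sup>+y. indicator (E_set lam b f) (x, y) * ennreal (norm (x - y) powr p) \<partial>lborel)
          \<in> borel_measurable lborel"
    by (rule lborel.borel_measurable_nn_integral)
  then show ?thesis unfolding nn_integral_completion by (rule measurable_completion)
qed



lemma ennreal_le_suminf: "(f :: nat \<Rightarrow> ennreal) k \<le> suminf f"
  using sum_le_suminf[OF summableI, of "{k}" f] by simp

lemma annulus_bound:
  fixes x :: "'a::euclidean_space" and p \<rho> :: real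
  assumes \<rho>: "\<rho> > 0"
  shows "(\<integral>\<^sup>+y. indicator {y. \<rho> / 2 \<le> norm (x - y) \<and> norm (x - y) < \<rho>} y * ennreal (norm (x - y) powr p) \<partial>lborel)
    \<le> ennreal (2 powr \<bar>p\<bar> * unit_ball_vol (real DIM('a)) * \<rho> powr (p + real DIM('a)))"
proof -
  define B where "B = 2 powr \<bar>p\<bar> * \<rho> powr p"
  have pt: "indicator {y. \<rho> / 2 \<le> norm (x - y) \<and> norm (x - y) < \<rho>} y * ennreal (norm (x - y) powr p)
      \<le> ennreal B * indicator (ball x \<rho>) y" for y
  proof (cases "\<rho> / 2 \<le> norm (x - y) \<and> norm (x - y) < \<rho>")
    case True
    define d where "d = norm (x - y)"
    have d: "\<rho> / 2 \<le> d" "d < \<rho>" "d > 0" using True \<rho> unfolding d_def by auto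
    have "d powr p \<le> B"
    proof (cases "p \<ge> 0")
      case True
      have "d powr p \<le> \<rho> powr p" using d True by (intro powr_mono2) auto
      also have "\<dots> \<le> 2 powr \<bar>p\<bar> * \<rho> powr p"
      proof -
        have "1 \<le> 2 powr \<bar>p\<bar>" by (simp add: ge_one_powr_ge_zero)
        from mult_right_mono[OF this, of "\<rho> powr p"] show ?thesis by simp
      qed
      finally show ?thesis unfolding B_def .
    next
      case False
      have "d powr p \<le> (\<rho> / 2) powr p"
        apply (rule powr_mono2') using d False \<rho> by simp_all
      also have "\<dots> = \<rho> powr p / 2 powr p" using \<rho> by (simp add: powr_divide)
      also have "\<dots> = 2 powr (- p) * \<rho> powr p" by (simp add: powr_minus divide_inverse)
      also have "- p = \<bar>p\<bar>" using False by simp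
      finally show ?thesis unfolding B_def .
    qed
    moreover have "y \<in> ball x \<rho>" using d unfolding d_def by (simp add: dist_norm)
    ultimately show ?thesis using True unfolding d_def by (simp add: indicator_def ennreal_leI)
  next
    case False then show ?thesis by simp
  qed
  have "(\<integral>\<^sup>+y. indicator {y. \<rho> / 2 \<le> norm (x - y) \<and> norm (x - y) < \<rho>} y * ennreal (norm (x - y) powr p) \<partial>lborel)
      \<le> (\<integral>\<^sup>+y. ennreal B * indicator (ball x \<rho>) y \<partial>lborel)"
    by (intro nn_integral_mono pt)
  also have "\<dots> = ennreal B * emeasure lborel (ball x \<rho>)"
    by (rule nn_integral_cmult_indicator) simp
  also have "\<dots> = ennreal (B * (unit_ball_vol (real DIM('a)) * \<rho> ^ DIM('a)))"
    using \<rho> by (simp add: emeasure_ball ennreal_mult B_def)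
  also have "B * (unit_ball_vol (real DIM('a)) * \<rho> ^ DIM('a)) = 2 powr \<bar>p\<bar> * unit_ball_vol (real DIM('a)) * \<rho> powr (p + real DIM('a))"
    unfolding B_def using \<rho> by (simp add: powr_add powr_realpow)
  finally show ?thesis .
qed

lemma shell_sum:
  fixes x :: "'a::euclidean_space" and p :: real and \<rho> :: "nat \<Rightarrow> real" and S :: "'a set"
  assumes \<rho>: "\<And>k. \<rho> k > 0" and S: "S \<in> sets borel"
    and cov: "\<And>y. y \<in> S \<Longrightarrow> \<exists>k. \<rho> k / 2 \<le> norm (x - y) \<and> norm (x - y) < \<rho> k"
  shows "(\<integral>\<^sup>+y. indicator S y * ennreal (norm (x - y) powr p) \<partial>lborel)
    \<le> (\<Sum>k. ennreal (2 powr \<bar>p\<bar> * unit_ball_vol (real DIM('a)) * \<rho> k powr (p + real DIM('a))))"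
proof -
  define A where "A k = {y. \<rho> k / 2 \<le> norm (x - y) \<and> norm (x - y) < \<rho> k}" for k
  have Am: "A k \<in> sets borel" for k unfolding A_def by measurable
  have pt: "indicator S y * ennreal (norm (x - y) powr p) \<le> (\<Sum>k. indicator (A k) y * ennreal (norm (x - y) powr p))" for y
  proof (cases "y \<in> S")
    case True
    then obtain k where "y \<in> A k" using cov unfolding A_def by blast
    then have "indicator S y * ennreal (norm (x - y) powr p) = indicator (A k) y * ennreal (norm (x - y) powr p)"
      using True by simp
    also have "\<dots> \<le> (\<Sum>k. indicator (A k) y * ennreal (norm (x - y) powr p))"
      by (rule ennreal_le_suminf)
    finally show ?thesis .
  next
    case False then show ?thesis by simp
  qed
  have "(\<integral>\<^sup>+y. indicator S y * ennreal (norm (x - y) powr p) \<partial>lborel)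
      \<le> (\<integral>\<^sup>+y. (\<Sum>k. indicator (A k) y * ennreal (norm (x - y) powr p)) \<partial>lborel)"
    by (intro nn_integral_mono pt)
  also have "\<dots> = (\<Sum>k. \<integral>\<^sup>+y. indicator (A k) y * ennreal (norm (x - y) powr p) \<partial>lborel)"
    by (rule nn_integral_suminf) (use Am in measurable)
  also have "\<dots> \<le> (\<Sum>k. ennreal (2 powr \<bar>p\<bar> * unit_ball_vol (real DIM('a)) * \<rho> k powr (p + real DIM('a))))"
  proof (intro suminf_le summableI)
    fix k show "(\<integral>\<^sup>+y. indicator (A k) y * ennreal (norm (x - y) powr p) \<partial>lborel)
      \<le> ennreal (2 powr \<bar>p\<bar> * unit_ball_vol (real DIM('a)) * \<rho> k powr (p + real DIM('a)))"
      unfolding A_def by (rule annulus_bound[OF \<rho>])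
  qed
  finally show ?thesis .
qed

lemma dyadic_down:
  fixes d T :: real
  assumes "0 < d" "d < T"
  shows "\<exists>k::nat. T / 2 ^ (k + 1) \<le> d \<and> d < T / 2 ^ k"
proof -
  obtain n :: nat where n: "T / d < 2 ^ n" using real_arch_pow[of 2 "T / d"] by auto
  then have "T < d * 2 ^ n" using assms by (simp add: divide_less_eq mult.commute)
  moreover have "d * 2 ^ n \<le> d * 2 ^ (n + 1)" using assms by simp
  ultimately have "T \<le> d * 2 ^ (n + 1)" by linarith
  then have P: "T / 2 ^ (n + 1) \<le> d" by (simp add: divide_le_eq del: power_Suc)
  define k where "k = (LEAST k. T / 2 ^ (k + 1) \<le> d)"
  have k: "T / 2 ^ (k + 1) \<le> d" unfolding k_def by (rule LeastI[of _ n]) (rule P)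
  show ?thesis
  proof (cases k)
    case 0 then show ?thesis using k assms by (intro exI[of _ 0]) auto
  next
    case (Suc j)
    then have "\<not> T / 2 ^ (j + 1) \<le> d" using not_less_Least[of j "\<lambda>k. T / 2 ^ (k + 1) \<le> d"] unfolding k_def by auto
    then show ?thesis using k Suc by (intro exI[of _ k]) auto
  qed
qed

lemma dyadic_up:
  fixes d T :: real
  assumes "0 < T" "T < d"
  shows "\<exists>k::nat. T * 2 ^ k \<le> d \<and> d < T * 2 ^ (k + 1)"
proof -
  obtain n :: nat where n: "d / T < 2 ^ n" using real_arch_pow[of 2 "d / T"] by auto
  then have "d < T * 2 ^ n" using assms by (simp add: divide_less_eq mult.commute)
  also have "\<dots> \<le> T * 2 ^ (n + 1)" using assms by simp
  finally have P: "d < T * 2 ^ (n + 1)" .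
  define k where "k = (LEAST k. d < T * 2 ^ (k + 1))"
  have k: "d < T * 2 ^ (k + 1)" unfolding k_def by (rule LeastI[of _ n]) (rule P)
  show ?thesis
  proof (cases k)
    case 0 then show ?thesis using k assms by (intro exI[of _ 0]) auto
  next
    case (Suc j)
    then have "\<not> d < T * 2 ^ (j + 1)" using not_less_Least[of j "\<lambda>k. d < T * 2 ^ (k + 1)"] unfolding k_def by auto
    then show ?thesis using k Suc by (intro exI[of _ k]) auto
  qed
qed

lemma pow2_powr: "((2::real) ^ k) powr g = (2 powr g) ^ k"
proof -
  have "((2::real) ^ k) powr g = (2 powr real k) powr g" by (simp add: powr_realpow)
  also have "\<dots> = 2 powr (real k * g)" by (simp add: powr_powr)
  also have "\<dots> = (2 powr g) ^ k" by (simp add: powr_power)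
  finally show ?thesis .
qed

lemma shell_pos:
  fixes \<gamma> :: real
  assumes "\<gamma> > 0"
  shows "\<exists>cs>0. \<forall>(x::'a::euclidean_space) T. T > 0 \<longrightarrow>
    (\<integral>\<^sup>+y. indicator {y. y \<noteq> x \<and> norm (x - y) < T} y * ennreal (norm (x - y) powr (\<gamma> - real DIM('a))) \<partial>lborel)
      \<le> ennreal (cs * T powr \<gamma>)"
proof -
  define p where "p = \<gamma> - real DIM('a)"
  define c0 where "c0 = 2 powr \<bar>p\<bar> * unit_ball_vol (real DIM('a))"
  define qq where "qq = (2::real) powr (- \<gamma>)"
  have qq: "0 < qq" "qq < 1" unfolding qq_def using assms powr_less_mono[of "- \<gamma>" 0 2] by auto
  have c0: "c0 > 0" unfolding c0_def by simp
  define cs where "cs = c0 / (1 - qq)"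
  have cs: "cs > 0" unfolding cs_def using c0 qq by simp
  show ?thesis
  proof (intro exI[of _ cs] conjI allI impI cs)
    fix x :: 'a and T :: real assume T: "T > 0"
    define \<rho> where "\<rho> k = T / 2 ^ k" for k :: nat
    have "(\<integral>\<^sup>+y. indicator {y. y \<noteq> x \<and> norm (x - y) < T} y * ennreal (norm (x - y) powr p) \<partial>lborel)
      \<le> (\<Sum>k. ennreal (c0 * \<rho> k powr (p + real DIM('a))))"
      unfolding c0_def
    proof (rule shell_sum)
      show "\<rho> k > 0" for k unfolding \<rho>_def using T by simp
      show "{y. y \<noteq> x \<and> norm (x - y) < T} \<in> sets borel" by measurable
      fix y assume "y \<in> {y. y \<noteq> x \<and> norm (x - y) < T}"
      then have "0 < norm (x - y)" "norm (x - y) < T" by auto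
      from dyadic_down[OF this] obtain k where "T / 2 ^ (k + 1) \<le> norm (x - y)" "norm (x - y) < T / 2 ^ k" by blast
      then show "\<exists>k. \<rho> k / 2 \<le> norm (x - y) \<and> norm (x - y) < \<rho> k"
        unfolding \<rho>_def by (intro exI[of _ k]) (simp add: field_simps)
    qed
    also have "(\<lambda>k. ennreal (c0 * \<rho> k powr (p + real DIM('a)))) = (\<lambda>k. ennreal (c0 * T powr \<gamma> * qq ^ k))"
    proof
      fix k :: nat
      have "\<rho> k powr \<gamma> = T powr \<gamma> / (2 ^ k) powr \<gamma>" unfolding \<rho>_def using T by (simp add: powr_divide)
      also have "\<dots> = T powr \<gamma> * qq ^ k" unfolding qq_def pow2_powr
        by (simp add: powr_minus power_inverse divide_inverse)
      finally show "ennreal (c0 * \<rho> k powr (p + real DIM('a))) = ennreal (c0 * T powr \<gamma> * qq ^ k)"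
        unfolding p_def by (simp add: mult.assoc)
    qed
    also have "(\<Sum>k. ennreal (c0 * T powr \<gamma> * qq ^ k)) = ennreal (c0 * T powr \<gamma> * (1 / (1 - qq)))"
      using qq c0 by (intro suminf_ennreal_eq sums_mult geometric_sums) auto
    also have "c0 * T powr \<gamma> * (1 / (1 - qq)) = cs * T powr \<gamma>" unfolding cs_def by simp
    finally show "(\<integral>\<^sup>+y. indicator {y. y \<noteq> x \<and> norm (x - y) < T} y * ennreal (norm (x - y) powr (\<gamma> - real DIM('a))) \<partial>lborel)
      \<le> ennreal (cs * T powr \<gamma>)" unfolding p_def .
  qed
qed

lemma shell_neg:
  fixes \<gamma> :: real
  assumes "\<gamma> < 0"
  shows "\<exists>cs>0. \<forall>(x::'a::euclidean_space) T. T > 0 \<longrightarrow>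
    (\<integral>\<^sup>+y. indicator {y. T < norm (x - y)} y * ennreal (norm (x - y) powr (\<gamma> - real DIM('a))) \<partial>lborel)
      \<le> ennreal (cs * T powr \<gamma>)"
proof -
  define p where "p = \<gamma> - real DIM('a)"
  define c0 where "c0 = 2 powr \<bar>p\<bar> * unit_ball_vol (real DIM('a))"
  define qq where "qq = (2::real) powr \<gamma>"
  have qq: "0 < qq" "qq < 1" unfolding qq_def using assms powr_less_mono[of \<gamma> 0 2] by auto
  have c0: "c0 > 0" unfolding c0_def by simp
  define cs where "cs = c0 * qq / (1 - qq)"
  have cs: "cs > 0" unfolding cs_def using c0 qq by simp
  show ?thesis
  proof (intro exI[of _ cs] conjI allI impI cs)
    fix x :: 'a and T :: real assume T: "T > 0"
    define \<rho> where "\<rho> k = T * 2 ^ (k + 1)" for k :: nat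
    have "(\<integral>\<^sup>+y. indicator {y. T < norm (x - y)} y * ennreal (norm (x - y) powr p) \<partial>lborel)
      \<le> (\<Sum>k. ennreal (c0 * \<rho> k powr (p + real DIM('a))))"
      unfolding c0_def
    proof (rule shell_sum)
      show "\<rho> k > 0" for k unfolding \<rho>_def using T by simp
      show "{y. T < norm (x - y)} \<in> sets borel" by measurable
      fix y assume "y \<in> {y. T < norm (x - y)}"
      then have "T < norm (x - y)" by auto
      from dyadic_up[OF T this] obtain k where "T * 2 ^ k \<le> norm (x - y)" "norm (x - y) < T * 2 ^ (k + 1)" by blast
      then show "\<exists>k. \<rho> k / 2 \<le> norm (x - y) \<and> norm (x - y) < \<rho> k"
        unfolding \<rho>_def by (intro exI[of _ k]) (simp add: field_simps)
    qed
    also have "(\<lambda>k. ennreal (c0 * \<rho> k powr (p + real DIM('a)))) = (\<lambda>k. ennreal (c0 * qq * T powr \<gamma> * qq ^ k))"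
    proof
      fix k :: nat
      have "\<rho> k powr \<gamma> = T powr \<gamma> * (2 ^ (k + 1)) powr \<gamma>" unfolding \<rho>_def using T by (simp add: powr_mult)
      also have "\<dots> = qq * T powr \<gamma> * qq ^ k" unfolding qq_def pow2_powr by simp
      finally show "ennreal (c0 * \<rho> k powr (p + real DIM('a))) = ennreal (c0 * qq * T powr \<gamma> * qq ^ k)"
        unfolding p_def by (simp add: mult.assoc)
    qed
    also have "(\<Sum>k. ennreal (c0 * qq * T powr \<gamma> * qq ^ k)) = ennreal (c0 * qq * T powr \<gamma> * (1 / (1 - qq)))"
      using qq c0 by (intro suminf_ennreal_eq sums_mult geometric_sums) auto
    also have "c0 * qq * T powr \<gamma> * (1 / (1 - qq)) = cs * T powr \<gamma>" unfolding cs_def by simp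
    finally show "(\<integral>\<^sup>+y. indicator {y. T < norm (x - y)} y * ennreal (norm (x - y) powr (\<gamma> - real DIM('a))) \<partial>lborel)
      \<le> ennreal (cs * T powr \<gamma>)" unfolding p_def .
  qed
qed



lemma young_simple:
  fixes u T r :: real
  assumes u: "u \<ge> 0" and T: "T > 0" and r: "r \<ge> 1"
  shows "u \<le> T + T powr (1 - r) * u powr r"
proof (cases "u \<le> T")
  case True
  then show ?thesis using u T by (simp add: add_increasing2)
next
  case False
  then have uT: "u / T \<ge> 1" using T by simp
  have "u / T = (u / T) powr 1" using uT u T by simp
  also have "\<dots> \<le> (u / T) powr r" using uT r by (intro powr_mono) auto
  finally have "u \<le> T * (u / T) powr r" using T by (simp add: divide_le_eq mult.commute)
  also have "T * (u / T) powr r = T powr (1 - r) * u powr r"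
  proof -
    have "(u / T) powr r = u powr r / T powr r" using u T by (simp add: powr_divide)
    moreover have "T powr (1 - r) = T / T powr r" using T by (simp add: powr_diff)
    ultimately show ?thesis by simp
  qed
  finally show ?thesis using T by simp
qed

lemma nn_integral_affine_euclidean:
  fixes h :: "'a::euclidean_space \<Rightarrow> ennreal" and c :: real and a :: 'a
  assumes [measurable]: "h \<in> borel_measurable borel" and c: "c > 0"
  shows "(\<integral>\<^sup>+w. h w \<partial>lborel) = ennreal (c ^ DIM('a)) * (\<integral>\<^sup>+z. h (a + c *\<^sub>R (z - a)) \<partial>lborel)"
proof -
  have eq: "a + c *\<^sub>R (z - a) = (a - c *\<^sub>R a) + c *\<^sub>R z" for z by (simp add: algebra_simps)
  have "(\<integral>\<^sup>+w. h w \<partial>lborel) = (\<integral>\<^sup>+w. h w \<partial>density (distr lborel borel (\<lambda>x. (a - c *\<^sub>R a) + c *\<^sub>R x)) (\<lambda>_. \<bar>c\<bar> ^ DIM('a)))"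
    using lborel_affine[of c "a - c *\<^sub>R a"] c by simp
  also have "\<dots> = (\<integral>\<^sup>+z. ennreal (c ^ DIM('a)) * h ((a - c *\<^sub>R a) + c *\<^sub>R z) \<partial>lborel)"
    using c by (simp add: nn_integral_density nn_integral_distr)
  also have "\<dots> = ennreal (c ^ DIM('a)) * (\<integral>\<^sup>+z. h (a + c *\<^sub>R (z - a)) \<partial>lborel)"
    unfolding eq by (rule nn_integral_cmult) simp
  finally show ?thesis .
qed

lemma hl_max_ball:
  fixes grad :: "'a::euclidean_space \<Rightarrow> 'a" and r S R :: real and x :: 'a
  assumes R: "R > 0" and M: "hl_max (\<lambda>y. norm (grad y) powr r) x \<le> ennreal (S powr r)"
  shows "(\<integral>\<^sup>+w. indicator (ball x R) w * ennreal (norm (grad w) powr r) \<partial>lborel)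
    \<le> ennreal (S powr r) * ennreal (unit_ball_vol (real DIM('a)) * R ^ DIM('a))"
proof -
  define J where "J = (\<integral>\<^sup>+w. indicator (ball x R) w * ennreal (norm (grad w) powr r) \<partial>lborel)"
  define \<mu> where "\<mu> = ennreal (unit_ball_vol (real DIM('a)) * R ^ DIM('a))"
  have u0: "unit_ball_vol (real DIM('a)) > 0" by simp
  have mu: "\<mu> \<noteq> 0" "\<mu> < top" unfolding \<mu>_def using u0 R by (simp_all add: less_imp_neq[symmetric])
  have "\<exists>c \<rho>. ball x R = ball c \<rho> \<and> 0 < \<rho> \<and> x \<in> ball c \<rho>" using R by (intro exI[of _ x] exI[of _ R]) simp
  then have "ball x R \<in> {ball c \<rho> | c \<rho>. 0 < \<rho> \<and> x \<in> ball c \<rho>}" by simp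
  then have "(\<integral>\<^sup>+y\<in>ball x R. ennreal \<bar>norm (grad y) powr r\<bar> \<partial>lebesgue) / emeasure lebesgue (ball x R)
      \<le> hl_max (\<lambda>y. norm (grad y) powr r) x"
    unfolding hl_max_def by (rule SUP_upper)
  also have "(\<integral>\<^sup>+y\<in>ball x R. ennreal \<bar>norm (grad y) powr r\<bar> \<partial>lebesgue) = J"
    unfolding J_def nn_integral_completion by (simp add: mult.commute)
  also have "emeasure lebesgue (ball x R) = \<mu>"
    unfolding \<mu>_def using R by (simp add: emeasure_ball)
  finally have "J / \<mu> \<le> ennreal (S powr r)" using M by simp
  then have "J / \<mu> * \<mu> \<le> ennreal (S powr r) * \<mu>" by (rule mult_right_mono) simp
  also have "J / \<mu> * \<mu> = J" using mu by (simp add: ennreal_divide_times)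
  finally show ?thesis unfolding J_def \<mu>_def .
qed

lemma ball_bound:
  fixes grad :: "'a::euclidean_space \<Rightarrow> 'a" and r S R s :: real and x a :: 'a
  assumes cg: "continuous_on UNIV grad" and r: "r \<ge> 1" and S: "S > 0" and s: "s > 0" and R: "R > 0"
    and sub: "ball a s \<subseteq> ball x R"
    and M: "hl_max (\<lambda>y. norm (grad y) powr r) x \<le> ennreal (S powr r)"
  shows "(\<integral>\<^sup>+w. indicator (ball a s) w * ennreal (norm (grad w)) \<partial>lborel)
    \<le> ennreal (2 * (S * (R / s) powr (real DIM('a) / r)) * unit_ball_vol (real DIM('a)) * s ^ DIM('a))"
proof -
  define n where "n = DIM('a)"
  define \<omega> where "\<omega> = unit_ball_vol (real DIM('a))"
  have \<omega>: "\<omega> > 0" unfolding \<omega>_def by simp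
  define T where "T = S * (R / s) powr (real n / r)"
  have T: "T > 0" unfolding T_def using S R s by simp
  have [measurable]: "grad \<in> borel_measurable borel" using cg by (rule borel_measurable_continuous_onI)
  have [measurable]: "ball a s \<in> sets borel" "ball x R \<in> sets borel" by auto
  have pt: "indicator (ball a s) w * ennreal (norm (grad w))
     \<le> ennreal T * indicator (ball a s) w + ennreal (T powr (1 - r)) * (indicator (ball x R) w * ennreal (norm (grad w) powr r))" for w
  proof (cases "w \<in> ball a s")
    case True
    then have "w \<in> ball x R" using sub by auto
    have "norm (grad w) \<le> T + T powr (1 - r) * norm (grad w) powr r"
      by (rule young_simple[OF _ T r]) simp
    then have "ennreal (norm (grad w)) \<le> ennreal (T + T powr (1 - r) * norm (grad w) powr r)"
      by (rule ennreal_leI)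
    also have "\<dots> = ennreal T + ennreal (T powr (1 - r)) * ennreal (norm (grad w) powr r)"
      using T by (simp add: ennreal_plus ennreal_mult)
    finally show ?thesis using True \<open>w \<in> ball x R\<close> by simp
  next
    case False then show ?thesis by simp
  qed
  have "(\<integral>\<^sup>+w. indicator (ball a s) w * ennreal (norm (grad w)) \<partial>lborel)
      \<le> (\<integral>\<^sup>+w. ennreal T * indicator (ball a s) w + ennreal (T powr (1 - r)) * (indicator (ball x R) w * ennreal (norm (grad w) powr r)) \<partial>lborel)"
    by (intro nn_integral_mono pt)
  also have "\<dots> = (\<integral>\<^sup>+w. ennreal T * indicator (ball a s) w \<partial>lborel) + (\<integral>\<^sup>+w. ennreal (T powr (1 - r)) * (indicator (ball x R) w * ennreal (norm (grad w) powr r)) \<partial>lborel)"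
    by (rule nn_integral_add) measurable
  also have "(\<integral>\<^sup>+w. ennreal T * indicator (ball a s) w \<partial>lborel) = ennreal T * ennreal (\<omega> * s ^ n)"
    using s by (simp add: nn_integral_cmult_indicator emeasure_ball \<omega>_def n_def)
  also have "(\<integral>\<^sup>+w. ennreal (T powr (1 - r)) * (indicator (ball x R) w * ennreal (norm (grad w) powr r)) \<partial>lborel)
      = ennreal (T powr (1 - r)) * (\<integral>\<^sup>+w. indicator (ball x R) w * ennreal (norm (grad w) powr r) \<partial>lborel)"
    by (rule nn_integral_cmult) measurable
  also have "\<dots> \<le> ennreal (T powr (1 - r)) * (ennreal (S powr r) * ennreal (\<omega> * R ^ n))"
    using hl_max_ball[OF R M] unfolding \<omega>_def n_def by (rule mult_left_mono) simp
  also have "ennreal T * ennreal (\<omega> * s ^ n) + ennreal (T powr (1 - r)) * (ennreal (S powr r) * ennreal (\<omega> * R ^ n))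
      = ennreal (T * (\<omega> * s ^ n) + T powr (1 - r) * (S powr r * (\<omega> * R ^ n)))"
    using T \<omega> S R s by (simp add: ennreal_plus ennreal_mult)
  also have "T powr (1 - r) * (S powr r * (\<omega> * R ^ n)) = T * (\<omega> * s ^ n)"
  proof -
    have Tr: "T powr r = S powr r * (R ^ n / s ^ n)"
      unfolding T_def using S R s r by (simp add: powr_mult powr_powr powr_realpow power_divide)
    have "T powr (1 - r) = T / T powr r" using T by (simp add: powr_diff)
    then show ?thesis unfolding Tr using S R s \<omega> T by (simp add: field_simps)
  qed
  also have "T * (\<omega> * s ^ n) + T * (\<omega> * s ^ n) = 2 * (S * (R / s) powr (real DIM('a) / r)) * unit_ball_vol (real DIM('a)) * s ^ DIM('a)"
    unfolding T_def \<omega>_def n_def by simp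
  finally show ?thesis by (simp add: add_mono)
qed

lemma segment_bound:
  fixes f :: "'a::euclidean_space \<Rightarrow> real" and grad :: "'a \<Rightarrow> 'a" and a z :: 'a
  assumes df: "\<forall>x. (f has_derivative (\<lambda>h. grad x \<bullet> h)) (at x)" and cg: "continuous_on UNIV grad"
  shows "ennreal \<bar>f z - f a\<bar> \<le> (\<integral>\<^sup>+t. ennreal (indicator {0..1} t * (norm (grad (a + t *\<^sub>R (z - a))) * norm (z - a))) \<partial>lborel)"
proof -
  define \<phi> where "\<phi> t = f (a + t *\<^sub>R (z - a))" for t :: real
  define \<phi>' where "\<phi>' t = grad (a + t *\<^sub>R (z - a)) \<bullet> (z - a)" for t :: real
  define G where "G t = norm (grad (a + t *\<^sub>R (z - a))) * norm (z - a)" for t :: real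
  have cgc: "continuous_on S (\<lambda>t::real. grad (a + t *\<^sub>R (z - a)))" for S
    by (rule continuous_on_compose2[OF cg]) (auto intro!: continuous_intros)
  have der: "(\<phi> has_vector_derivative \<phi>' t) (at t within {0..1})" for t
  proof -
    have l: "((\<lambda>t. a + t *\<^sub>R (z - a)) has_derivative (\<lambda>s. s *\<^sub>R (z - a))) (at t within {0..1})"
      by (auto intro!: derivative_eq_intros)
    have "(f has_derivative (\<lambda>h. grad (a + t *\<^sub>R (z - a)) \<bullet> h)) (at (a + t *\<^sub>R (z - a)))" using df by blast
    from has_derivative_compose[OF l this]
    have "(\<phi> has_derivative (\<lambda>s. grad (a + t *\<^sub>R (z - a)) \<bullet> (s *\<^sub>R (z - a)))) (at t within {0..1})"
      unfolding \<phi>_def .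
    moreover have "(\<lambda>s. grad (a + t *\<^sub>R (z - a)) \<bullet> (s *\<^sub>R (z - a))) = (\<lambda>s. s *\<^sub>R \<phi>' t)"
      unfolding \<phi>'_def by (simp add: inner_scaleR_right)
    ultimately show ?thesis unfolding has_vector_derivative_def by simp
  qed
  have ftc: "(\<phi>' has_integral \<phi> 1 - \<phi> 0) {0..1}"
    by (rule fundamental_theorem_of_calculus) (auto intro: der)
  have Gc: "continuous_on {0..1} G" unfolding G_def by (intro continuous_intros cgc)
  have Gi: "G integrable_on {0..1}" using Gc by (rule integrable_continuous_interval)
  have "norm (integral {0..1} \<phi>') \<le> integral {0..1} G"
  proof (rule integral_norm_bound_integral)
    show "\<phi>' integrable_on {0..1}" using ftc by blast
    show "G integrable_on {0..1}" by (rule Gi)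
    fix t show "norm (\<phi>' t) \<le> G t" unfolding \<phi>'_def G_def by (simp add: Cauchy_Schwarz_ineq2)
  qed
  moreover have "integral {0..1} \<phi>' = f z - f a" using ftc unfolding \<phi>_def by (simp add: integral_unique)
  ultimately have "\<bar>f z - f a\<bar> \<le> integral {0..1} G" by simp
  then have "ennreal \<bar>f z - f a\<bar> \<le> ennreal (integral {0..1} G)" by (rule ennreal_leI)
  also have "ennreal (integral {0..1} G) = (\<integral>\<^sup>+t. ennreal (indicator {0..1} t * G t) \<partial>lborel)"
  proof (rule nn_integral_has_integral_lebesgue[symmetric])
    show "(G has_integral integral {0..1} G) {0..1}" using Gi by (rule integrable_integral)
  qed (simp add: G_def)
  finally show ?thesis unfolding G_def .
qed

lemma inner_t_bound:
  fixes f :: "'a::euclidean_space \<Rightarrow> real" and grad :: "'a \<Rightarrow> 'a" and a x :: 'a and r S \<rho> t :: real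
  assumes cg: "continuous_on UNIV grad" and r: "r \<ge> 1" and S: "S > 0" and \<rho>: "\<rho> > 0"
    and ax: "dist x a \<le> \<rho>" and M: "hl_max (\<lambda>y. norm (grad y) powr r) x \<le> ennreal (S powr r)"
    and t: "0 < t" "t \<le> 1"
  shows "(\<integral>\<^sup>+z. indicator (ball a \<rho>) z * ennreal (norm (grad (a + t *\<^sub>R (z - a))) * norm (z - a)) \<partial>lborel)
    \<le> ennreal (2 * unit_ball_vol (real DIM('a)) * 2 powr (real DIM('a) / r) * S * \<rho> ^ (DIM('a) + 1) * t powr (- (real DIM('a) / r)))"
proof -
  define \<omega> where "\<omega> = unit_ball_vol (real DIM('a))"
  have [measurable]: "grad \<in> borel_measurable borel" using cg by (rule borel_measurable_continuous_onI)
  have [measurable]: "ball a s \<in> sets borel" for s by auto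
  define B where "B = 2 * (S * (2 * \<rho> / (t * \<rho>)) powr (real DIM('a) / r)) * \<omega> * (t * \<rho>) ^ DIM('a)"
  have B0: "B \<ge> 0" unfolding B_def \<omega>_def using S t \<rho> by simp
  have sub: "ball a (t * \<rho>) \<subseteq> ball x (2 * \<rho>)"
  proof
    fix w assume "w \<in> ball a (t * \<rho>)"
    then have "dist a w < t * \<rho>" by simp
    moreover have "t * \<rho> \<le> \<rho>" using t \<rho> by simp
    ultimately show "w \<in> ball x (2 * \<rho>)" using ax dist_triangle[of x w a] by simp
  qed
  have X: "(\<integral>\<^sup>+w. indicator (ball a (t * \<rho>)) w * ennreal (norm (grad w)) \<partial>lborel) \<le> ennreal B"
    unfolding B_def \<omega>_def using ball_bound[OF cg r S _ _ sub M] t \<rho> by simp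
  have ind: "indicator (ball a (t * \<rho>)) (a + t *\<^sub>R (z - a)) = (indicator (ball a \<rho>) z :: ennreal)" for z
  proof -
    have "dist a (a + t *\<^sub>R (z - a)) = t * dist a z" using t by (simp add: dist_norm norm_minus_commute)
    then show ?thesis using t \<rho> by (simp add: indicator_def)
  qed
  have "(\<integral>\<^sup>+w. indicator (ball a (t * \<rho>)) w * ennreal (norm (grad w)) \<partial>lborel)
      = ennreal (t ^ DIM('a)) * (\<integral>\<^sup>+z. indicator (ball a \<rho>) z * ennreal (norm (grad (a + t *\<^sub>R (z - a)))) \<partial>lborel)"
    by (subst nn_integral_affine_euclidean[where c=t and a=a]) (use t in \<open>simp_all add: ind\<close>)
  then have Y0: "ennreal (t ^ DIM('a)) * (\<integral>\<^sup>+z. indicator (ball a \<rho>) z * ennreal (norm (grad (a + t *\<^sub>R (z - a)))) \<partial>lborel) \<le> ennreal B"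
    using X by simp
  have Y: "(\<integral>\<^sup>+z. indicator (ball a \<rho>) z * ennreal (norm (grad (a + t *\<^sub>R (z - a)))) \<partial>lborel) \<le> ennreal (B / t ^ DIM('a))"
  proof -
    have "(\<integral>\<^sup>+z. indicator (ball a \<rho>) z * ennreal (norm (grad (a + t *\<^sub>R (z - a)))) \<partial>lborel)
       = ennreal (1 / t ^ DIM('a)) * (ennreal (t ^ DIM('a)) * (\<integral>\<^sup>+z. indicator (ball a \<rho>) z * ennreal (norm (grad (a + t *\<^sub>R (z - a)))) \<partial>lborel))"
      using t by (simp add: mult.assoc[symmetric] ennreal_mult[symmetric])
    also have "\<dots> \<le> ennreal (1 / t ^ DIM('a)) * ennreal B" using Y0 by (rule mult_left_mono) simp
    also have "\<dots> = ennreal (1 / t ^ DIM('a) * B)" by (rule ennreal_mult[symmetric]) (use t B0 in auto)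
    also have "1 / t ^ DIM('a) * B = B / t ^ DIM('a)" by simp
    finally show ?thesis .
  qed
  have "(\<integral>\<^sup>+z. indicator (ball a \<rho>) z * ennreal (norm (grad (a + t *\<^sub>R (z - a))) * norm (z - a)) \<partial>lborel)
     \<le> (\<integral>\<^sup>+z. ennreal \<rho> * (indicator (ball a \<rho>) z * ennreal (norm (grad (a + t *\<^sub>R (z - a))))) \<partial>lborel)"
  proof (intro nn_integral_mono)
    fix z
    show "indicator (ball a \<rho>) z * ennreal (norm (grad (a + t *\<^sub>R (z - a))) * norm (z - a))
       \<le> ennreal \<rho> * (indicator (ball a \<rho>) z * ennreal (norm (grad (a + t *\<^sub>R (z - a)))))"
    proof (cases "z \<in> ball a \<rho>")
      case True
      then have "norm (z - a) \<le> \<rho>" by (simp add: dist_norm norm_minus_commute)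
      then have "norm (grad (a + t *\<^sub>R (z - a))) * norm (z - a) \<le> \<rho> * norm (grad (a + t *\<^sub>R (z - a)))"
        by (subst mult.commute) (rule mult_right_mono, simp_all)
      then show ?thesis using True \<rho> by (simp add: ennreal_mult[symmetric] ennreal_leI)
    qed simp
  qed
  also have "\<dots> = ennreal \<rho> * (\<integral>\<^sup>+z. indicator (ball a \<rho>) z * ennreal (norm (grad (a + t *\<^sub>R (z - a)))) \<partial>lborel)"
    by (rule nn_integral_cmult) measurable
  also have "\<dots> \<le> ennreal \<rho> * ennreal (B / t ^ DIM('a))" using Y by (rule mult_left_mono) simp
  also have "\<dots> = ennreal (\<rho> * (B / t ^ DIM('a)))" by (rule ennreal_mult[symmetric]) (use \<rho> t B0 in auto)
  also have "\<rho> * (B / t ^ DIM('a)) = 2 * \<omega> * 2 powr (real DIM('a) / r) * S * \<rho> ^ (DIM('a) + 1) * t powr (- (real DIM('a) / r))"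
  proof -
    have "2 * \<rho> / (t * \<rho>) = 2 / t" using \<rho> by simp
    moreover have "(2 / t) powr (real DIM('a) / r) = 2 powr (real DIM('a) / r) * t powr (- (real DIM('a) / r))"
    proof -
      have "(2 / t) powr (real DIM('a) / r) = 2 powr (real DIM('a) / r) / t powr (real DIM('a) / r)"
        using t by (simp add: powr_divide)
      also have "\<dots> = 2 powr (real DIM('a) / r) * t powr (- (real DIM('a) / r))"
        by (simp only: powr_minus divide_inverse)
      finally show ?thesis .
    qed
    moreover have "(t * \<rho>) ^ DIM('a) / t ^ DIM('a) = \<rho> ^ DIM('a)" using t by (simp add: power_mult_distrib)
    ultimately show ?thesis unfolding B_def using t \<rho>
      by (simp add: field_simps power_mult_distrib)
  qed
  finally show ?thesis unfolding \<omega>_def .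
qed

lemma half_bound:
  fixes f :: "'a::euclidean_space \<Rightarrow> real" and grad :: "'a \<Rightarrow> 'a" and a x :: 'a and r S \<rho> :: real
  assumes df: "\<forall>x. (f has_derivative (\<lambda>h. grad x \<bullet> h)) (at x)" and cg: "continuous_on UNIV grad"
    and r: "real DIM('a) < r" and S: "S > 0" and \<rho>: "\<rho> > 0"
    and ax: "dist x a \<le> \<rho>" and M: "hl_max (\<lambda>y. norm (grad y) powr r) x \<le> ennreal (S powr r)"
  shows "(\<integral>\<^sup>+z. indicator (ball a \<rho>) z * ennreal \<bar>f z - f a\<bar> \<partial>lborel)
    \<le> ennreal (2 * unit_ball_vol (real DIM('a)) * 2 powr (real DIM('a) / r) * S * \<rho> ^ (DIM('a) + 1) * (1 / (1 - real DIM('a) / r)))"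
proof -
  define K where "K = 2 * unit_ball_vol (real DIM('a)) * 2 powr (real DIM('a) / r) * S * \<rho> ^ (DIM('a) + 1)"
  have K: "K \<ge> 0" unfolding K_def using S \<rho> by simp
  have "real DIM('a) \<ge> 1" by simp
  then have r1: "r \<ge> 1" using r by linarith
  have rpos: "r > 0" using r1 by simp
  have nr: "real DIM('a) / r < 1" using r rpos by simp
  have [measurable]: "grad \<in> borel_measurable borel" using cg by (rule borel_measurable_continuous_onI)
  have [measurable]: "ball a \<rho> \<in> sets borel" by auto
  define H where "H z t = indicator (ball a \<rho>) z * ennreal (indicator {0..1} t * (norm (grad (a + t *\<^sub>R (z - a))) * norm (z - a)))" for z :: 'a and t :: real
  have Hm: "case_prod H \<in> borel_measurable (lborel \<Otimes>\<^sub>M lborel)"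
    unfolding H_def by measurable
  have "(\<integral>\<^sup>+z. indicator (ball a \<rho>) z * ennreal \<bar>f z - f a\<bar> \<partial>lborel) \<le> (\<integral>\<^sup>+z. (\<integral>\<^sup>+t. H z t \<partial>lborel) \<partial>lborel)"
  proof (rule nn_integral_mono)
    fix z
    have "indicator (ball a \<rho>) z * ennreal \<bar>f z - f a\<bar>
       \<le> indicator (ball a \<rho>) z * (\<integral>\<^sup>+t. ennreal (indicator {0..1} t * (norm (grad (a + t *\<^sub>R (z - a))) * norm (z - a))) \<partial>lborel)"
      by (rule mult_left_mono[OF segment_bound[OF df cg]]) simp
    also have "\<dots> = (\<integral>\<^sup>+t. H z t \<partial>lborel)"
      unfolding H_def by (rule nn_integral_cmult[symmetric]) measurable
    finally show "indicator (ball a \<rho>) z * ennreal \<bar>f z - f a\<bar> \<le> (\<integral>\<^sup>+t. H z t \<partial>lborel)" .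
  qed
  also have "\<dots> = (\<integral>\<^sup>+t. (\<integral>\<^sup>+z. H z t \<partial>lborel) \<partial>lborel)"
    by (rule pair_sigma_finite.Fubini'[symmetric, OF _ Hm]) unfold_locales
  also have "\<dots> \<le> (\<integral>\<^sup>+t. ennreal (indicator {0..1} t * (K * t powr (- (real DIM('a) / r)))) \<partial>lborel)"
  proof (rule nn_integral_mono_AE)
    show "AE t in lborel. (\<integral>\<^sup>+z. H z t \<partial>lborel) \<le> ennreal (indicator {0..1} t * (K * t powr (- (real DIM('a) / r))))"
      using AE_lborel_singleton[of 0]
    proof eventually_elim
      case (elim t)
      show ?case
      proof (cases "t \<in> {0..1}")
        case True
        then have t: "0 < t" "t \<le> 1" using elim by auto
        have "(\<integral>\<^sup>+z. H z t \<partial>lborel) = (\<integral>\<^sup>+z. indicator (ball a \<rho>) z * ennreal (norm (grad (a + t *\<^sub>R (z - a))) * norm (z - a)) \<partial>lborel)"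
          unfolding H_def using True by simp
        also have "\<dots> \<le> ennreal (K * t powr (- (real DIM('a) / r)))"
          unfolding K_def using inner_t_bound[OF cg r1 S \<rho> ax M t] by simp
        finally show ?thesis using True by simp
      next
        case False
        then show ?thesis unfolding H_def by simp
      qed
    qed
  qed
  also have "\<dots> = ennreal (K * (1 powr (- (real DIM('a) / r) + 1) / (- (real DIM('a) / r) + 1)))"
  proof (rule nn_integral_has_integral_lebesgue)
    show "((\<lambda>t. K * t powr (- (real DIM('a) / r))) has_integral K * (1 powr (- (real DIM('a) / r) + 1) / (- (real DIM('a) / r) + 1))) {0..1}"
      by (intro has_integral_mult_right has_integral_powr_from_0) (use nr in auto)
  qed (use K in simp)
  also have "K * (1 powr (- (real DIM('a) / r) + 1) / (- (real DIM('a) / r) + 1)) = K * (1 / (1 - real DIM('a) / r))"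
    by simp
  finally show ?thesis unfolding K_def .
qed

lemma morrey:
  fixes r :: real
  assumes r: "real DIM('a::euclidean_space) < r"
  shows "\<exists>CM>0. \<forall>(f::'a \<Rightarrow> real) grad x y S. (\<forall>x. (f has_derivative (\<lambda>h. grad x \<bullet> h)) (at x)) \<and> continuous_on UNIV grad
     \<and> S > 0 \<and> hl_max (\<lambda>y. norm (grad y) powr r) x \<le> ennreal (S powr r) \<longrightarrow> \<bar>f x - f y\<bar> \<le> CM * norm (x - y) * S"
proof -
  define \<omega> where "\<omega> = unit_ball_vol (real DIM('a))"
  have \<omega>: "\<omega> > 0" unfolding \<omega>_def by simp
  have "real DIM('a) \<ge> 1" by simp
  then have rpos: "r > 0" using r by linarith
  have nr: "real DIM('a) / r < 1" using r rpos by simp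
  define Cm where "Cm = 2 * \<omega> * 2 powr (real DIM('a) / r) * (1 / (1 - real DIM('a) / r))"
  have Cm: "Cm > 0" unfolding Cm_def using \<omega> nr by simp
  define CM where "CM = 2 * Cm * 2 ^ DIM('a) / \<omega>"
  have CM: "CM > 0" unfolding CM_def using Cm \<omega> by simp
  show ?thesis
  proof (intro exI[of _ CM] conjI CM allI impI)
    fix f :: "'a \<Rightarrow> real" and grad :: "'a \<Rightarrow> 'a" and x y :: 'a and S :: real
    assume H: "(\<forall>x. (f has_derivative (\<lambda>h. grad x \<bullet> h)) (at x)) \<and> continuous_on UNIV grad
     \<and> S > 0 \<and> hl_max (\<lambda>y. norm (grad y) powr r) x \<le> ennreal (S powr r)"
    then have df: "\<forall>x. (f has_derivative (\<lambda>h. grad x \<bullet> h)) (at x)" and cg: "continuous_on UNIV grad"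
      and S: "S > 0" and M: "hl_max (\<lambda>y. norm (grad y) powr r) x \<le> ennreal (S powr r)" by blast+
    show "\<bar>f x - f y\<bar> \<le> CM * norm (x - y) * S"
    proof (cases "x = y")
      case True then show ?thesis by simp
    next
      case False
      define \<rho> where "\<rho> = norm (x - y)"
      have \<rho>: "\<rho> > 0" unfolding \<rho>_def using False by simp
      have fc: "continuous_on UNIV f"
      proof (rule continuous_at_imp_continuous_on, intro ballI)
        fix x have "(f has_derivative (\<lambda>h. grad x \<bullet> h)) (at x)" using df by blast
        then show "isCont f x" by (rule has_derivative_continuous)
      qed
      have [measurable]: "f \<in> borel_measurable borel" using fc by (rule borel_measurable_continuous_onI)
      have [measurable]: "ball x \<rho> \<in> sets borel" "ball y \<rho> \<in> sets borel" by auto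
      define m where "m = midpoint x y"
      define W where "W = ball m (\<rho> / 2)"
      have dxm: "dist x m = \<rho> / 2" unfolding m_def \<rho>_def using dist_midpoint(1)[of x y] by (simp only: dist_norm)
      have dym: "dist y m = \<rho> / 2" unfolding m_def \<rho>_def using dist_midpoint(2)[of y x] by (simp only: dist_norm)
      have Wx: "W \<subseteq> ball x \<rho>" unfolding W_def
      proof
        fix z assume "z \<in> ball m (\<rho> / 2)"
        then show "z \<in> ball x \<rho>" using dxm dist_triangle[of x z m] by simp
      qed
      have Wy: "W \<subseteq> ball y \<rho>" unfolding W_def
      proof
        fix z assume "z \<in> ball m (\<rho> / 2)"
        then show "z \<in> ball y \<rho>" using dym dist_triangle[of y z m] by simp
      qed
      have pt: "ennreal \<bar>f x - f y\<bar> * indicator W z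
        \<le> indicator (ball x \<rho>) z * ennreal \<bar>f z - f x\<bar> + indicator (ball y \<rho>) z * ennreal \<bar>f z - f y\<bar>" for z
      proof (cases "z \<in> W")
        case True
        then have "z \<in> ball x \<rho>" "z \<in> ball y \<rho>" using Wx Wy by auto
        moreover have "ennreal \<bar>f x - f y\<bar> \<le> ennreal (\<bar>f z - f x\<bar> + \<bar>f z - f y\<bar>)"
          by (rule ennreal_leI) simp
        ultimately show ?thesis using True by (simp add: ennreal_plus)
      qed simp
      have "ennreal (\<bar>f x - f y\<bar> * (\<omega> * (\<rho> / 2) ^ DIM('a))) = ennreal \<bar>f x - f y\<bar> * emeasure lborel W"
        unfolding W_def \<omega>_def using \<rho> by (simp add: emeasure_ball ennreal_mult)
      also have "\<dots> = (\<integral>\<^sup>+z. ennreal \<bar>f x - f y\<bar> * indicator W z \<partial>lborel)"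
        unfolding W_def by (rule nn_integral_cmult_indicator[symmetric]) simp
      also have "\<dots> \<le> (\<integral>\<^sup>+z. indicator (ball x \<rho>) z * ennreal \<bar>f z - f x\<bar> + indicator (ball y \<rho>) z * ennreal \<bar>f z - f y\<bar> \<partial>lborel)"
        by (intro nn_integral_mono pt)
      also have "\<dots> = (\<integral>\<^sup>+z. indicator (ball x \<rho>) z * ennreal \<bar>f z - f x\<bar> \<partial>lborel) + (\<integral>\<^sup>+z. indicator (ball y \<rho>) z * ennreal \<bar>f z - f y\<bar> \<partial>lborel)"
        by (rule nn_integral_add) measurable
      also have "\<dots> \<le> ennreal (Cm * S * \<rho> ^ (DIM('a) + 1)) + ennreal (Cm * S * \<rho> ^ (DIM('a) + 1))"
      proof (rule add_mono)
        show "(\<integral>\<^sup>+z. indicator (ball x \<rho>) z * ennreal \<bar>f z - f x\<bar> \<partial>lborel) \<le> ennreal (Cm * S * \<rho> ^ (DIM('a) + 1))"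
          using half_bound[OF df cg r S \<rho> _ M, of x] \<rho> unfolding Cm_def \<omega>_def by (simp add: mult_ac)
        show "(\<integral>\<^sup>+z. indicator (ball y \<rho>) z * ennreal \<bar>f z - f y\<bar> \<partial>lborel) \<le> ennreal (Cm * S * \<rho> ^ (DIM('a) + 1))"
          using half_bound[OF df cg r S \<rho> _ M, of y] \<rho> unfolding Cm_def \<omega>_def \<rho>_def by (simp add: mult_ac dist_norm)
      qed
      also have "\<dots> = ennreal (2 * (Cm * S * \<rho> ^ (DIM('a) + 1)))"
        using Cm S \<rho> by (simp add: ennreal_plus[symmetric])
      finally have "\<bar>f x - f y\<bar> * (\<omega> * (\<rho> / 2) ^ DIM('a)) \<le> 2 * (Cm * S * \<rho> ^ (DIM('a) + 1))"
        using Cm S \<rho> by (subst (asm) ennreal_le_iff) auto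
      moreover have "\<omega> * (\<rho> / 2) ^ DIM('a) > 0" using \<omega> \<rho> by simp
      ultimately have "\<bar>f x - f y\<bar> \<le> 2 * (Cm * S * \<rho> ^ (DIM('a) + 1)) / (\<omega> * (\<rho> / 2) ^ DIM('a))"
        by (simp add: pos_le_divide_eq)
      also have "\<dots> = CM * \<rho> * S"
        unfolding CM_def using \<omega> \<rho> by (simp add: power_divide field_simps)
      finally show ?thesis unfolding \<rho>_def .
    qed
  qed
qed

lemma shell_any:
  fixes \<gamma> q :: real
  assumes "\<gamma> \<noteq> 0" "q > 0"
  shows "\<exists>cs>0. \<forall>(x::'a::euclidean_space) T. T > 0 \<longrightarrow>
    (\<integral>\<^sup>+y. indicator {y. y \<noteq> x \<and> norm (x - y) powr (\<gamma> / q) < T} y * ennreal (norm (x - y) powr (\<gamma> - real DIM('a))) \<partial>lborel)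
      \<le> ennreal (cs * T powr q)"
proof (cases "\<gamma> > 0")
  case True
  then obtain cs where cs: "cs > 0" and H: "\<And>(x::'a) T. T > 0 \<Longrightarrow>
    (\<integral>\<^sup>+y. indicator {y. y \<noteq> x \<and> norm (x - y) < T} y * ennreal (norm (x - y) powr (\<gamma> - real DIM('a))) \<partial>lborel)
      \<le> ennreal (cs * T powr \<gamma>)" using shell_pos[of \<gamma>] by blast
  have b: "\<gamma> / q > 0" using True assms by simp
  show ?thesis
  proof (intro exI[of _ cs] conjI allI impI cs)
    fix x :: 'a and T :: real assume T: "T > 0"
    define T' where "T' = T powr (q / \<gamma>)"
    have T': "T' > 0" using T by (simp add: T'_def)
    have sub: "{y. y \<noteq> x \<and> norm (x - y) powr (\<gamma> / q) < T} \<subseteq> {y. y \<noteq> x \<and> norm (x - y) < T'}"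
    proof safe
      fix y assume y: "y \<noteq> x" "norm (x - y) powr (\<gamma> / q) < T"
      have "(norm (x - y) powr (\<gamma> / q)) powr (q / \<gamma>) < T powr (q / \<gamma>)"
        using y b assms True by (intro powr_less_mono2) auto
      then show "norm (x - y) < T'" using y b assms True unfolding T'_def by (simp add: powr_powr)
    qed
    have "(\<integral>\<^sup>+y. indicator {y. y \<noteq> x \<and> norm (x - y) powr (\<gamma> / q) < T} y * ennreal (norm (x - y) powr (\<gamma> - real DIM('a))) \<partial>lborel)
       \<le> (\<integral>\<^sup>+y. indicator {y. y \<noteq> x \<and> norm (x - y) < T'} y * ennreal (norm (x - y) powr (\<gamma> - real DIM('a))) \<partial>lborel)"
      using sub by (intro nn_integral_mono mult_right_mono) (auto simp: indicator_def)
    also have "\<dots> \<le> ennreal (cs * T' powr \<gamma>)" using H T' by blast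
    also have "T' powr \<gamma> = T powr q" unfolding T'_def using True by (simp add: powr_powr)
    finally show "(\<integral>\<^sup>+y. indicator {y. y \<noteq> x \<and> norm (x - y) powr (\<gamma> / q) < T} y * ennreal (norm (x - y) powr (\<gamma> - real DIM('a))) \<partial>lborel)
      \<le> ennreal (cs * T powr q)" .
  qed
next
  case False
  then have neg: "\<gamma> < 0" using assms by simp
  then obtain cs where cs: "cs > 0" and H: "\<And>(x::'a) T. T > 0 \<Longrightarrow>
    (\<integral>\<^sup>+y. indicator {y. T < norm (x - y)} y * ennreal (norm (x - y) powr (\<gamma> - real DIM('a))) \<partial>lborel)
      \<le> ennreal (cs * T powr \<gamma>)" using shell_neg[of \<gamma>] by blast
  have b: "\<gamma> / q < 0" using neg assms by (simp add: divide_neg_pos)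
  have b': "q / \<gamma> < 0" using neg assms by (simp add: divide_pos_neg)
  show ?thesis
  proof (intro exI[of _ cs] conjI allI impI cs)
    fix x :: 'a and T :: real assume T: "T > 0"
    define T' where "T' = T powr (q / \<gamma>)"
    have T': "T' > 0" using T by (simp add: T'_def)
    have sub: "{y. y \<noteq> x \<and> norm (x - y) powr (\<gamma> / q) < T} \<subseteq> {y. T' < norm (x - y)}"
    proof safe
      fix y assume y: "y \<noteq> x" "norm (x - y) powr (\<gamma> / q) < T"
      have "T powr (q / \<gamma>) < (norm (x - y) powr (\<gamma> / q)) powr (q / \<gamma>)"
        using y b' by (intro powr_less_mono2_neg) auto
      then show "T' < norm (x - y)" using y neg assms unfolding T'_def by (simp add: powr_powr)
    qed
    have "(\<integral>\<^sup>+y. indicator {y. y \<noteq> x \<and> norm (x - y) powr (\<gamma> / q) < T} y * ennreal (norm (x - y) powr (\<gamma> - real DIM('a))) \<partial>lborel)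
       \<le> (\<integral>\<^sup>+y. indicator {y. T' < norm (x - y)} y * ennreal (norm (x - y) powr (\<gamma> - real DIM('a))) \<partial>lborel)"
      using sub by (intro nn_integral_mono mult_right_mono) (auto simp: indicator_def)
    also have "\<dots> \<le> ennreal (cs * T' powr \<gamma>)" using H T' by blast
    also have "T' powr \<gamma> = T powr q" unfolding T'_def using neg by (simp add: powr_powr)
    finally show "(\<integral>\<^sup>+y. indicator {y. y \<noteq> x \<and> norm (x - y) powr (\<gamma> / q) < T} y * ennreal (norm (x - y) powr (\<gamma> - real DIM('a))) \<partial>lborel)
      \<le> ennreal (cs * T powr q)" .
  qed
qed

lemma enn_powr_le:
  assumes "F \<le> ennreal v" "v \<ge> 0" "p > 0"
  shows "enn_powr F p \<le> ennreal (v powr p)"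
proof -
  have "F \<noteq> top" using assms(1) by (auto simp: top_unique)
  then obtain f0 where f0: "F = ennreal f0" "f0 \<ge> 0" by (cases F) auto
  then have "f0 \<le> v" using assms by simp
  then show ?thesis using f0 assms by (simp add: enn_powr_ennreal powr_mono2)
qed

lemma pointwise_main:
  fixes \<gamma> r q :: real
  assumes "\<gamma> \<noteq> 0" "real DIM('a::euclidean_space) < r" "0 < q"
  shows "\<exists>c3>0. \<forall>(f::'a \<Rightarrow> real) grad x lam. (\<forall>x. (f has_derivative (\<lambda>h. grad x \<bullet> h)) (at x)) \<and> continuous_on UNIV grad \<and> lam > 0 \<longrightarrow>
     enn_powr (\<integral>\<^sup>+y. indicator (E_set lam (\<gamma> / q) f) (x, y) * ennreal (norm (x - y) powr (\<gamma> - real DIM('a))) \<partial>lebesgue) (1 / q)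
       \<le> ennreal (c3 / lam) * enn_powr (hl_max (\<lambda>y. norm (grad y) powr r) x) (1 / r)"
proof -
  obtain CM where CM: "CM > 0" and mor: "\<And>(f::'a \<Rightarrow> real) grad x y S. (\<forall>x. (f has_derivative (\<lambda>h. grad x \<bullet> h)) (at x)) \<Longrightarrow> continuous_on UNIV grad
     \<Longrightarrow> S > 0 \<Longrightarrow> hl_max (\<lambda>y. norm (grad y) powr r) x \<le> ennreal (S powr r) \<Longrightarrow> \<bar>f x - f y\<bar> \<le> CM * norm (x - y) * S"
    using morrey[OF assms(2)] by blast
  obtain cs where cs: "cs > 0" and sh: "\<And>(x::'a) T. T > 0 \<Longrightarrow>
    (\<integral>\<^sup>+y. indicator {y. y \<noteq> x \<and> norm (x - y) powr (\<gamma> / q) < T} y * ennreal (norm (x - y) powr (\<gamma> - real DIM('a))) \<partial>lborel)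
      \<le> ennreal (cs * T powr q)"
    using shell_any[OF assms(1,3)] by blast
  have r: "r > 0" using assms(2) by (metis of_nat_0_le_iff order.strict_trans1)
  define c3 where "c3 = cs powr (1 / q) * CM"
  have c3: "c3 > 0" unfolding c3_def using cs CM by simp
  show ?thesis
  proof (intro exI[of _ c3] conjI c3 allI impI)
    fix f :: "'a \<Rightarrow> real" and grad x and lam :: real
    assume H: "(\<forall>x. (f has_derivative (\<lambda>h. grad x \<bullet> h)) (at x)) \<and> continuous_on UNIV grad \<and> lam > 0"
    then have df: "\<forall>x. (f has_derivative (\<lambda>h. grad x \<bullet> h)) (at x)" and cg: "continuous_on UNIV grad"
      and lam: "lam > 0" by blast+
    define Fx where "Fx = (\<integral>\<^sup>+y. indicator (E_set lam (\<gamma> / q) f) (x, y) * ennreal (norm (x - y) powr (\<gamma> - real DIM('a))) \<partial>lebesgue)"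
    define Mx where "Mx = hl_max (\<lambda>y. norm (grad y) powr r) x"
    have key: "enn_powr Fx (1 / q) \<le> ennreal (c3 * S / lam)" if S: "S > 0" and MS: "Mx \<le> ennreal (S powr r)" for S
    proof -
      define u where "u = CM * S / lam"
      have u: "u > 0" unfolding u_def using CM S lam by simp
      have sub: "indicator (E_set lam (\<gamma> / q) f) (x, y) \<le> (indicator {y. y \<noteq> x \<and> norm (x - y) powr (\<gamma> / q) < u} y :: ennreal)" for y
      proof (cases "(x, y) \<in> E_set lam (\<gamma> / q) f")
        case True
        then have ne: "x \<noteq> y" and lt: "lam < \<bar>f x - f y\<bar> / norm (x - y) powr (1 + \<gamma> / q)"
          unfolding E_set_def by auto
        define d where "d = norm (x - y)"
        have d: "d > 0" using ne unfolding d_def by simp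
        have "lam * d powr (1 + \<gamma> / q) < \<bar>f x - f y\<bar>" using lt d unfolding d_def
          by (simp add: pos_less_divide_eq)
        also have "\<dots> \<le> CM * d * S" unfolding d_def using mor[OF df cg S MS[unfolded Mx_def]] .
        finally have "lam * d * d powr (\<gamma> / q) < CM * d * S" using d by (simp add: powr_add mult.assoc)
        then have "d * (lam * d powr (\<gamma> / q)) < d * (CM * S)" by (simp add: algebra_simps)
        then have "lam * d powr (\<gamma> / q) < CM * S" using d by simp
        then have "d powr (\<gamma> / q) < u" unfolding u_def using lam by (simp add: pos_less_divide_eq mult.commute)
        then show ?thesis using ne True unfolding d_def by (simp add: indicator_def)
      next
        case False then show ?thesis by simp
      qed
      have "Fx = (\<integral>\<^sup>+y. indicator (E_set lam (\<gamma> / q) f) (x, y) * ennreal (norm (x - y) powr (\<gamma> - real DIM('a))) \<partial>lborel)"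
        unfolding Fx_def by (rule nn_integral_completion)
      also have "\<dots> \<le> (\<integral>\<^sup>+y. indicator {y. y \<noteq> x \<and> norm (x - y) powr (\<gamma> / q) < u} y * ennreal (norm (x - y) powr (\<gamma> - real DIM('a))) \<partial>lborel)"
        by (intro nn_integral_mono mult_right_mono sub) simp
      also have "\<dots> \<le> ennreal (cs * u powr q)" by (rule sh[OF u])
      finally have "enn_powr Fx (1 / q) \<le> ennreal ((cs * u powr q) powr (1 / q))"
        using cs u assms(3) by (intro enn_powr_le) auto
      also have "(cs * u powr q) powr (1 / q) = c3 * S / lam"
        using cs u assms(3) CM S lam unfolding c3_def u_def by (simp add: powr_mult powr_powr)
      finally show ?thesis .
    qed
    show "enn_powr Fx (1 / q) \<le> ennreal (c3 / lam) * enn_powr Mx (1 / r)"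
    proof (cases Mx)
      case top
      then show ?thesis using c3 lam by (simp add: enn_powr_top ennreal_mult_top)
    next
      case (real m)
      show ?thesis
      proof (cases "m = 0")
        case False
        then have m: "m > 0" using real by simp
        define S where "S = m powr (1 / r)"
        have S: "S > 0" unfolding S_def using m by simp
        have "S powr r = m" unfolding S_def using m r by (simp add: powr_powr)
        then have "enn_powr Fx (1 / q) \<le> ennreal (c3 * S / lam)" using key[OF S] real by simp
        also have "\<dots> = ennreal (c3 / lam) * enn_powr Mx (1 / r)"
          using real m c3 lam unfolding S_def by (simp add: enn_powr_ennreal ennreal_mult[symmetric])
        finally show ?thesis .
      next
        case True
        have "Fx0 \<le> 0" if "Fx0 = enn_powr Fx (1 / q)" for Fx0
        proof -
          have b: "Fx0 \<le> ennreal (c3 * S / lam)" if "S > 0" for S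
            using key[OF that] real True \<open>Fx0 = _\<close> that by simp
          have "Fx0 \<le> ennreal (c3 * 1 / lam)" by (rule b) simp
          then obtain v where v: "Fx0 = ennreal v" "v \<ge> 0" by (cases Fx0) (auto simp: top_unique)
          show ?thesis
          proof (rule ccontr)
            assume "\<not> Fx0 \<le> 0"
            then have vp: "v > 0" using v by simp
            define S where "S = v * lam / (2 * c3)"
            have S: "S > 0" unfolding S_def using vp lam c3 by simp
            have "v \<le> c3 * S / lam" using b[OF S] v vp c3 lam S by simp
            also have "\<dots> = v / 2" unfolding S_def using c3 lam by simp
            finally show False using vp by simp
          qed
        qed
        then show ?thesis by simp
      qed
    qed
  qed
qed

theorem theorem3p6:
  fixes \<gamma> r q K :: real
  assumes "\<gamma> \<noteq> 0" and "real DIM('a::euclidean_space) < r" and "0 < q"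
  shows "\<exists>C>0. \<forall>(N :: ('a \<Rightarrow> real) \<Rightarrow> ennreal) (f :: 'a \<Rightarrow> real) (grad :: 'a \<Rightarrow> 'a).
     ball_Banach_function_space N \<and>
     (\<exists>K'. maximal_bound N (1 / r) K') \<and> hl_opnorm N (1 / r) = K \<and>
     (\<forall>x. (f has_derivative (\<lambda>h. grad x \<bullet> h)) (at x)) \<and> continuous_on UNIV grad \<and>
     compact (closure {x. grad x \<noteq> 0})
     \<longrightarrow> (SUP lam \<in> {0<..}. ennreal lam * ext_norm N (\<lambda>x.
            enn_powr (\<integral>\<^sup>+y. indicator (E_set lam (\<gamma> / q) f) (x, y)
                 * ennreal (norm (x - y) powr (\<gamma> - real DIM('a))) \<partial>lebesgue) (1 / q)))
         \<le> ennreal C * N (\<lambda>x. norm (grad x))"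
proof -
  obtain c3 where c3: "c3 > 0" and pw: "\<And>(f::'a \<Rightarrow> real) grad x lam. (\<forall>x. (f has_derivative (\<lambda>h. grad x \<bullet> h)) (at x)) \<Longrightarrow> continuous_on UNIV grad \<Longrightarrow> lam > 0 \<Longrightarrow>
     enn_powr (\<integral>\<^sup>+y. indicator (E_set lam (\<gamma> / q) f) (x, y) * ennreal (norm (x - y) powr (\<gamma> - real DIM('a))) \<partial>lebesgue) (1 / q)
       \<le> ennreal (c3 / lam) * enn_powr (hl_max (\<lambda>y. norm (grad y) powr r) x) (1 / r)"
    using pointwise_main[OF assms] by blast
  have "real DIM('a) > 0" by simp
  then have r: "r > 0" using assms(2) by linarith
  define C where "C = c3 * (\<bar>K\<bar> + 1) powr (1 / r)"
  show ?thesis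
  proof (intro exI[of _ C] conjI allI impI)
    have "(\<bar>K\<bar> + 1) powr (1 / r) > 0" by simp
    then show "C > 0" unfolding C_def using c3 by (rule_tac mult_pos_pos) 
  next
    fix N :: "('a \<Rightarrow> real) \<Rightarrow> ennreal" and f :: "'a \<Rightarrow> real" and grad :: "'a \<Rightarrow> 'a"
    assume H: "ball_Banach_function_space N \<and>
     (\<exists>K'. maximal_bound N (1 / r) K') \<and> hl_opnorm N (1 / r) = K \<and>
     (\<forall>x. (f has_derivative (\<lambda>h. grad x \<bullet> h)) (at x)) \<and> continuous_on UNIV grad \<and>
     compact (closure {x. grad x \<noteq> 0})"
    then have N: "ball_Banach_function_space N" and df: "\<forall>x. (f has_derivative (\<lambda>h. grad x \<bullet> h)) (at x)"
      and cg: "continuous_on UNIV grad" and ex: "\<exists>K'. maximal_bound N (1 / r) K'" and on: "hl_opnorm N (1 / r) = K"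
      by blast+
    have "maximal_bound N (1 / r) (K + 1)" by (rule opnorm_bound(1)[OF ex on])
    then have mb: "maximal_bound N (1 / r) (\<bar>K\<bar> + 1)" by (rule maximal_bound_mono) simp
    have fc: "continuous_on UNIV f"
    proof (rule continuous_at_imp_continuous_on, intro ballI)
      fix x have "(f has_derivative (\<lambda>h. grad x \<bullet> h)) (at x)" using df by blast
      then show "isCont f x" by (rule has_derivative_continuous)
    qed
    have [measurable]: "f \<in> borel_measurable borel" using fc by (rule borel_measurable_continuous_onI)
    define G where "G = (\<lambda>x. enn_powr (hl_max (\<lambda>y. norm (grad y) powr r) x) (1 / r))"
    have Gm: "G \<in> borel_measurable lebesgue" unfolding G_def
      by (intro measurable_enn_powr measurable_completion) (simp add: measurable_lborel2 hl_max_borel)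
    have GB: "ext_norm N G \<le> ennreal ((\<bar>K\<bar> + 1) powr (1 / r)) * N (\<lambda>x. norm (grad x))"
      unfolding G_def using maxbound_G[OF N mb r _ cg] by simp
    show "(SUP lam \<in> {0<..}. ennreal lam * ext_norm N (\<lambda>x.
            enn_powr (\<integral>\<^sup>+y. indicator (E_set lam (\<gamma> / q) f) (x, y)
                 * ennreal (norm (x - y) powr (\<gamma> - real DIM('a))) \<partial>lebesgue) (1 / q)))
         \<le> ennreal C * N (\<lambda>x. norm (grad x))"
    proof (rule SUP_least)
      fix lam :: real assume "lam \<in> {0<..}"
      then have lam: "lam > 0" by simp
      define Phi where "Phi = (\<lambda>x. enn_powr (\<integral>\<^sup>+y. indicator (E_set lam (\<gamma> / q) f) (x, y)
                 * ennreal (norm (x - y) powr (\<gamma> - real DIM('a))) \<partial>lebesgue) (1 / q))"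
      have Phim: "Phi \<in> borel_measurable lebesgue" unfolding Phi_def
        by (intro measurable_enn_powr F_measurable) simp
      have "ext_norm N Phi \<le> ext_norm N (\<lambda>x. ennreal (c3 / lam) * G x)"
        using Phim Gm pw[OF df cg lam] unfolding Phi_def G_def
        by (intro ext_norm_mono[OF N]) (auto simp: Phi_def G_def)
      also have "\<dots> \<le> ennreal (c3 / lam) * ext_norm N G"
        using c3 lam by (intro ext_norm_scale[OF N Gm]) simp
      finally have "ennreal lam * ext_norm N Phi \<le> ennreal lam * (ennreal (c3 / lam) * ext_norm N G)"
        by (rule mult_left_mono) simp
      also have "\<dots> = ennreal c3 * ext_norm N G"
        using lam c3 by (simp add: ennreal_mult[symmetric] mult.assoc[symmetric])
      also have "\<dots> \<le> ennreal c3 * (ennreal ((\<bar>K\<bar> + 1) powr (1 / r)) * N (\<lambda>x. norm (grad x)))"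
        by (rule mult_left_mono[OF GB]) simp
      also have "\<dots> = ennreal C * N (\<lambda>x. norm (grad x))"
        unfolding C_def using c3 by (simp add: ennreal_mult mult.assoc)
      finally show "ennreal lam * ext_norm N Phi \<le> ennreal C * N (\<lambda>x. norm (grad x))" .
    qed
  qed
qed


end
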